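(* Let $q$ be an odd prime power, let $d\in\mathbb{N}$ be even with $d\mid(q-1)$ and $(q-1)/d$ odd. Let $h\in\mathbb{F}_q[x]$, $T(x)=x^{(q-1)/d}$ and $f(x)=x^2h(T(x))$. If $f$ is a permutation polynomial of $\mathbb{F}_q$, then $\delta_f\le 2d^2-\tfrac{3}{2}d$.
   Context: A polynomial $f\in\mathbb{F}_q[x]$ is a permutation polynomial of $\mathbb{F}_q$ if $c\mapsto f(c)$ is a bijection of $\mathbb{F}_q$. For $a\in\mathbb{F}_q^*$, $\Delta_{f,a}(x)=f(x+a)-f(x)$, and the differential uniformity is $\delta_f=\max_{a\in\mathbb{F}_q^*,\,c\in\mathbb{F}_q}|\{x\in\mathbb{F}_q:\Delta_{f,a}(x)=c\}|$. *)

theory Defs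
  imports "HOL-Computational_Algebra.Polynomial"
begin

definition diff_uniformity :: "('a::{finite,ring_1} \<Rightarrow> 'a) \<Rightarrow> nat" where
  "diff_uniformity f =
     Max {card {x. f (x + a) - f x = c} | a c. a \<noteq> 0}"

definition permutation_poly :: "('a::{finite,comm_ring_1}) poly \<Rightarrow> bool" where
  "permutation_poly p \<longleftrightarrow> bij (poly p)"

end

theory Submission
  imports Defs
begin

lemma ofnat_card_zero: "of_nat (card (UNIV::'a set)) = (0::'a::{finite,ring_1})"
proof -
  have b: "bij_betw (\<lambda>y::'a. y + 1) UNIV UNIV"
    by (rule bij_betw_byWitness[where f'="\<lambda>y. y - 1"]) auto
  have "(\<Sum>y\<in>UNIV. y) = (\<Sum>y\<in>UNIV. (y::'a) + 1)"
    using sum.reindex_bij_betw[OF b, of "\<lambda>y. y"] by simp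
  also have "\<dots> = (\<Sum>y\<in>UNIV. y) + of_nat (card (UNIV::'a set))"
    by (simp add: sum.distrib)
  finally show ?thesis by simp
qed

lemma two_ne_zero_odd:
  assumes "odd (card (UNIV::'a::{finite,field} set))"
  shows "(2::'a) \<noteq> 0"
proof
  assume h: "(2::'a) = 0"
  obtain m where m: "card (UNIV::'a set) = 2*m+1" using assms oddE by blast
  have "(0::'a) = of_nat (2*m+1)" using ofnat_card_zero[where 'a='a] m by simp
  also have "\<dots> = 2 * of_nat m + 1" by simp
  also have "\<dots> = 1" using h by simp
  finally show False by simp
qed

lemma fermat_ff:
  fixes x :: "'a::{finite,field}"
  assumes "x \<noteq> 0"
  shows "x ^ (card (UNIV::'a set) - 1) = 1"
proof -
  let ?U = "UNIV - {0::'a}"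
  have b: "bij_betw (\<lambda>y. x * y) ?U ?U"
    by (rule bij_betw_byWitness[where f'="\<lambda>y. y / x"]) (use assms in auto)
  have "prod id ?U = prod (\<lambda>y. x * y) ?U"
    using prod.reindex_bij_betw[OF b, of id] by simp
  also have "\<dots> = x ^ card ?U * prod id ?U"
    by (simp add: prod.distrib)
  finally have e: "prod id ?U = x ^ card ?U * prod id ?U" .
  have nz: "prod id ?U \<noteq> 0" by (subst prod_zero_iff) auto
  have "card ?U = card (UNIV::'a set) - 1" by (simp add: card_Diff_subset)
  with e nz show ?thesis by simp
qed

lemma quad_card_le2:
  fixes a c H1 H2 :: "'a::{finite,field}"
  assumes "H2 \<noteq> 0" "(2::'a) \<noteq> 0" "a \<noteq> 0"
  shows "card {x. H2*(x+a)^2 - H1*x^2 = c} \<le> 2"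
proof -
  let ?p = "[:a^2*H2 - c, 2*a*H2, H2 - H1:]"
  have eq: "{x. H2*(x+a)^2 - H1*x^2 = c} = {x. poly ?p x = 0}"
    by (auto simp: algebra_simps power2_eq_square)
  have "coeff ?p 1 \<noteq> 0" using assms by simp
  hence "?p \<noteq> 0" by auto
  hence "card {x. poly ?p x = 0} \<le> degree ?p" by (rule card_poly_roots_bound)
  also have "degree ?p \<le> 2" by (simp add: degree_pCons_le)
  finally show ?thesis using eq by simp
qed


definition Qs :: "'a::field \<Rightarrow> 'a \<Rightarrow> nat \<Rightarrow> 'a \<Rightarrow> 'a \<Rightarrow> 'a \<Rightarrow> 'a \<Rightarrow> 'a set" where
  "Qs a c s H1 H2 w1 w2 = {x. x \<noteq> 0 \<and> x + a \<noteq> 0 \<and> x^s = w1 \<and> (x+a)^s = w2 \<and> H2*(x+a)^2 - H1*x^2 = c}"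

lemma vieta2:
  fixes a c H1 H2 x1 x2 :: "'a::field"
  assumes "(2::'a) \<noteq> 0" "a \<noteq> 0" "H2 \<noteq> 0" "x1 \<noteq> x2"
    and e1: "H2*(x1+a)^2 - H1*x1^2 = c" and e2: "H2*(x2+a)^2 - H1*x2^2 = c"
  shows "H1 \<noteq> H2 \<and> (H2-H1)*(x1*x2) = a^2*H2 - c \<and> (H2-H1)*((x1+a)*(x2+a)) = -(a^2*H1) - c"
proof -
  have "(x1 - x2) * ((H2-H1)*(x1+x2) + 2*a*H2) = (H2*(x1+a)^2 - H1*x1^2) - (H2*(x2+a)^2 - H1*x2^2)"
    by (simp add: algebra_simps power2_eq_square)
  hence "(x1 - x2) * ((H2-H1)*(x1+x2) + 2*a*H2) = 0" using e1 e2 by simp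
  hence s: "(H2-H1)*(x1+x2) + 2*a*H2 = 0" using assms(4) by simp
  have s': "(H2-H1)*(x1+x2) = -(2*a*H2)" using s by (simp only: eq_neg_iff_add_eq_0)
  have ne: "H1 \<noteq> H2"
  proof
    assume "H1 = H2" with s have "2*a*H2 = 0" by simp
    with assms show False by simp
  qed
  have p: "(H2-H1)*(x1*x2) = a^2*H2 - c"
  proof -
    have "2*a*H2 = -((H2-H1)*(x1+x2))" using s' by simp
    hence "c = H2*x1^2 + 2*a*H2*x1 + H2*a^2 - H1*x1^2" using e1 by (simp add: algebra_simps power2_eq_square)
    also have "\<dots> = H2*x1^2 - ((H2-H1)*(x1+x2))*x1 + H2*a^2 - H1*x1^2"
      using \<open>2*a*H2 = _\<close> by simp
    finally show ?thesis by (simp add: algebra_simps power2_eq_square)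
  qed
  have "(H2-H1)*((x1+a)*(x2+a)) = (H2-H1)*(x1*x2) + a*((H2-H1)*(x1+x2)) + a^2*(H2-H1)"
    by (simp add: algebra_simps power2_eq_square)
  also have "\<dots> = a^2*H2 - c + a*(-2*a*H2) + a^2*(H2-H1)"
    using p s' by simp
  also have "\<dots> = -(a^2*H1) - c" by (simp add: algebra_simps power2_eq_square)
  finally show ?thesis using ne p by simp
qed


lemma pair_pow:
  fixes a c H1 H2 w1 w2 x1 x2 :: "'a::field"
  assumes "(2::'a) \<noteq> 0" "a \<noteq> 0" "H2 \<noteq> 0" "x1 \<noteq> x2"
    and x1: "x1 \<in> Qs a c s H1 H2 w1 w2" and x2: "x2 \<in> Qs a c s H1 H2 w1 w2"
  shows "H1 \<noteq> H2 \<and> (a^2*H2 - c)^s = (H2-H1)^s * w1^2 \<and> (-(a^2*H1) - c)^s = (H2-H1)^s * w2^2"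
proof -
  from x1 x2 have e1: "H2*(x1+a)^2 - H1*x1^2 = c" and e2: "H2*(x2+a)^2 - H1*x2^2 = c"
    and p1: "x1^s = w1" "(x1+a)^s = w2" and p2: "x2^s = w1" "(x2+a)^s = w2"
    by (auto simp: Qs_def)
  from vieta2[OF assms(1-4) e1 e2] have ne: "H1 \<noteq> H2"
    and v1: "(H2-H1)*(x1*x2) = a^2*H2 - c" and v2: "(H2-H1)*((x1+a)*(x2+a)) = -(a^2*H1) - c"
    by auto
  have "(a^2*H2 - c)^s = (H2-H1)^s * (x1^s * x2^s)"
    by (subst v1[symmetric]) (simp add: power_mult_distrib)
  hence r1: "(a^2*H2 - c)^s = (H2-H1)^s * w1^2" using p1 p2 by (simp add: power2_eq_square)
  have "(-(a^2*H1) - c)^s = (H2-H1)^s * ((x1+a)^s * (x2+a)^s)"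
    by (subst v2[symmetric]) (simp add: power_mult_distrib)
  hence r2: "(-(a^2*H1) - c)^s = (H2-H1)^s * w2^2" using p1 p2 by (simp add: power2_eq_square)
  show ?thesis using ne r1 r2 by simp
qed

lemma self_neg_zero:
  fixes K :: "'a::field"
  assumes "(2::'a) \<noteq> 0" "K = - K"
  shows "K = 0"
proof -
  have "2 * K = K + K" by (rule mult_2)
  also have "\<dots> = K + - K" using assms(2) by (rule arg_cong)
  also have "\<dots> = 0" by (rule add.right_inverse)
  finally have "2 * K = 0" .
  thus ?thesis using assms(1) by simp
qed

lemma diag_le1:
  fixes a c B w :: "'a::{finite,field}"
  assumes two: "(2::'a) \<noteq> 0" and a: "a \<noteq> 0" and B: "B \<noteq> 0" and w: "w \<noteq> 0" and s: "odd s"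
  shows "card (Qs a c s B B w w) + of_bool (c = a^2*B \<and> a^s = w)
           + of_bool (c = -(a^2*B) \<and> (-a)^s = w) \<le> 1"
proof -
  define x0 where "x0 = (c - a^2*B) / (2*a*B)"
  have sub: "Qs a c s B B w w \<subseteq> {x0}"
  proof
    fix x assume "x \<in> Qs a c s B B w w"
    hence e: "B*(x+a)^2 - B*x^2 = c" by (simp add: Qs_def)
    have id: "B*(x+a)^2 - B*x^2 = (2*a*B)*x + a^2*B" by (simp add: algebra_simps power2_eq_square)
    have "(2*a*B) * x = c - a^2*B" using e unfolding id by (simp add: eq_diff_eq)
    moreover have "2*a*B \<noteq> 0" using two a B by simp
    ultimately have "x = x0" unfolding x0_def by (metis nonzero_mult_div_cancel_left)
    thus "x \<in> {x0}" by simp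
  qed
  have c1: "Qs a c s B B w w = {}" if "c = a^2*B"
  proof -
    have x0: "x0 = 0" unfolding x0_def using that by simp
    show ?thesis
    proof (rule ccontr)
      assume "Qs a c s B B w w \<noteq> {}"
      then obtain x where x: "x \<in> Qs a c s B B w w" by blast
      hence "x = x0" using sub by blast
      hence "x = 0" using x0 by simp
      with x show False by (simp add: Qs_def)
    qed
  qed
  have c2: "Qs a c s B B w w = {}" if "c = -(a^2*B)"
  proof -
    have nz: "2*a*B \<noteq> 0" using two a B by simp
    have "c - a^2*B = (2*a*B) * (-a)" using that by (simp add: algebra_simps power2_eq_square)
    hence x0: "x0 = -a" unfolding x0_def using nz by simp
    show ?thesis
    proof (rule ccontr)
      assume "Qs a c s B B w w \<noteq> {}"
      then obtain x where x: "x \<in> Qs a c s B B w w" by blast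
      hence "x = x0" using sub by blast
      hence "x + a = 0" using x0 by simp
      with x show False by (simp add: Qs_def)
    qed
  qed
  have c3: "\<not> (a^s = w \<and> (-a)^s = w)"
  proof
    assume h: "a^s = w \<and> (-a)^s = w"
    have "(-a)^s = - (a^s)" using s by (rule power_minus_odd)
    hence "w = - w" using h by simp
    thus False using self_neg_zero[OF two] w by blast
  qed
  have cardle: "card (Qs a c s B B w w) \<le> 1"
    using card_mono[OF _ sub] by simp
  show ?thesis
  proof (cases "c = a^2*B \<and> a^s = w")
    case True
    hence "\<not> (c = -(a^2*B) \<and> (-a)^s = w)" using c3 by blast
    thus ?thesis using True c1 by simp
  next
    case F1: False
    show ?thesis
    proof (cases "c = -(a^2*B) \<and> (-a)^s = w")
      case True
      thus ?thesis using F1 c2 by simp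
    next
      case False
      have z1: "of_bool (c = a^2*B \<and> a^s = w) = (0::nat)" using F1 by (simp only: of_bool_eq(1))
      have z2: "of_bool (c = -(a^2*B) \<and> (-a)^s = w) = (0::nat)" using False by (simp only: of_bool_eq(1))
      show ?thesis unfolding z1 z2 using cardle by simp
    qed
  qed
qed


lemma kill:
  fixes a c A B w x1 x2 y1 y2 :: "'a::field"
  assumes two: "(2::'a) \<noteq> 0" and a: "a \<noteq> 0" and A: "A \<noteq> 0" and B: "B \<noteq> 0"
    and w: "w \<noteq> 0" and s: "odd s"
    and x: "x1 \<noteq> x2" "x1 \<in> Qs a c s B A w (-w)" "x2 \<in> Qs a c s B A w (-w)"
    and y: "y1 \<noteq> y2" "y1 \<in> Qs a c s A B (-w) w" "y2 \<in> Qs a c s A B (-w) w"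
  shows "Qs a c s B B w w = {} \<and> Qs a c s A A (-w) (-w) = {} \<and>
         c \<noteq> a^2*B \<and> c \<noteq> -(a^2*B) \<and> c \<noteq> a^2*A \<and> c \<noteq> -(a^2*A)"
proof -
  have s0: "s > 0" using s by (cases s) auto
  from pair_pow[OF two a A x(1) x(2) x(3)]
  have ne: "B \<noteq> A" and k1: "(a^2*A - c)^s = (A-B)^s * w^2"
    and k2': "(-(a^2*B) - c)^s = (A-B)^s * (-w)^2" by auto
  from pair_pow[OF two a B y(1) y(2) y(3)]
  have k3': "(a^2*B - c)^s = (B-A)^s * (-w)^2"
    and k4': "(-(a^2*A) - c)^s = (B-A)^s * w^2" by auto
  define K where "K = (A-B)^s * w^2"
  have Knz: "K \<noteq> 0" unfolding K_def using ne w by simp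
  have BA: "(B-A)^s = - ((A-B)^s)"
  proof -
    have "B - A = - (A - B)" by simp
    hence "(B-A)^s = (-(A-B))^s" by simp
    also have "\<dots> = - ((A-B)^s)" using s by (rule power_minus_odd)
    finally show ?thesis .
  qed
  have k1: "(a^2*A - c)^s = K" using k1 unfolding K_def .
  have k2: "(-(a^2*B) - c)^s = K" using k2' unfolding K_def by simp
  have k3: "(a^2*B - c)^s = - K" using k3' unfolding K_def BA by simp
  have k4: "(-(a^2*A) - c)^s = - K" using k4' unfolding K_def BA by simp
  have negpow: "\<And>z::'a. (- z)^s = - (z^s)" using s by (rule power_minus_odd)
  have D1: "Qs a c s B B w w = {}"
  proof (rule ccontr)
    assume "Qs a c s B B w w \<noteq> {}"
    then obtain x where xx: "x \<in> Qs a c s B B w w" by blast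
    hence e: "B*(x+a)^2 - B*x^2 = c" and p: "x^s = w" "(x+a)^s = w" by (auto simp: Qs_def)
    have id: "B*(x+a)^2 - B*x^2 = (2*a*B)*x + a^2*B" by (simp add: algebra_simps power2_eq_square)
    have l1: "(2*a*B)*x = -(a^2*B - c)" using e unfolding id by (simp add: algebra_simps)
    have l2: "(2*a*B)*(x+a) = -(-(a^2*B) - c)" using e unfolding id by (simp add: algebra_simps power2_eq_square)
    have "(2*a*B)^s * w = K"
    proof -
      have "(2*a*B)^s * w = (2*a*B)^s * x^s" using p(1) by simp
      also have "\<dots> = ((2*a*B)*x)^s" by (rule power_mult_distrib[symmetric])
      also have "\<dots> = (-(a^2*B - c))^s" using l1 by (rule arg_cong)
      also have "\<dots> = - ((a^2*B - c)^s)" by (rule negpow)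
      also have "\<dots> = K" using k3 by simp
      finally show ?thesis .
    qed
    moreover have "(2*a*B)^s * w = -K"
    proof -
      have "(2*a*B)^s * w = (2*a*B)^s * (x+a)^s" using p(2) by simp
      also have "\<dots> = ((2*a*B)*(x+a))^s" by (rule power_mult_distrib[symmetric])
      also have "\<dots> = (-(-(a^2*B) - c))^s" using l2 by (rule arg_cong)
      also have "\<dots> = - ((-(a^2*B) - c)^s)" by (rule negpow)
      also have "\<dots> = -K" using k2 by simp
      finally show ?thesis .
    qed
    ultimately have "K = -K" by simp
    thus False using self_neg_zero[OF two] Knz by blast
  qed
  have D2: "Qs a c s A A (-w) (-w) = {}"
  proof (rule ccontr)
    assume "Qs a c s A A (-w) (-w) \<noteq> {}"
    then obtain x where xx: "x \<in> Qs a c s A A (-w) (-w)" by blast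
    hence e: "A*(x+a)^2 - A*x^2 = c" and p: "x^s = -w" "(x+a)^s = -w" by (auto simp: Qs_def)
    have id: "A*(x+a)^2 - A*x^2 = (2*a*A)*x + a^2*A" by (simp add: algebra_simps power2_eq_square)
    have l1: "(2*a*A)*x = -(a^2*A - c)" using e unfolding id by (simp add: algebra_simps)
    have l2: "(2*a*A)*(x+a) = -(-(a^2*A) - c)" using e unfolding id by (simp add: algebra_simps power2_eq_square)
    have "(2*a*A)^s * (-w) = -K"
    proof -
      have "(2*a*A)^s * (-w) = (2*a*A)^s * x^s" using p(1) by simp
      also have "\<dots> = ((2*a*A)*x)^s" by (rule power_mult_distrib[symmetric])
      also have "\<dots> = (-(a^2*A - c))^s" using l1 by (rule arg_cong)
      also have "\<dots> = - ((a^2*A - c)^s)" by (rule negpow)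
      also have "\<dots> = -K" using k1 by simp
      finally show ?thesis .
    qed
    moreover have "(2*a*A)^s * (-w) = K"
    proof -
      have "(2*a*A)^s * (-w) = (2*a*A)^s * (x+a)^s" using p(2) by simp
      also have "\<dots> = ((2*a*A)*(x+a))^s" by (rule power_mult_distrib[symmetric])
      also have "\<dots> = (-(-(a^2*A) - c))^s" using l2 by (rule arg_cong)
      also have "\<dots> = - ((-(a^2*A) - c)^s)" by (rule negpow)
      also have "\<dots> = K" using k4 by simp
      finally show ?thesis .
    qed
    ultimately have "K = -K" by simp
    thus False using self_neg_zero[OF two] Knz by blast
  qed
  have z: "(0::'a)^s = 0" using s0 by simp
  have c1: "c \<noteq> a^2*B"
  proof
    assume h: "c = a^2*B"
    have "(a^2*B - c)^s = 0" unfolding h using s0 by simp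
    with k3 Knz show False by simp
  qed
  have c2: "c \<noteq> -(a^2*B)"
  proof
    assume h: "c = -(a^2*B)"
    have "(-(a^2*B) - c)^s = 0" unfolding h using s0 by simp
    with k2 Knz show False by simp
  qed
  have c3: "c \<noteq> a^2*A"
  proof
    assume h: "c = a^2*A"
    have "(a^2*A - c)^s = 0" unfolding h using s0 by simp
    with k1 Knz show False by simp
  qed
  have c4: "c \<noteq> -(a^2*A)"
  proof
    assume h: "c = -(a^2*A)"
    have "(-(a^2*A) - c)^s = 0" unfolding h using s0 by simp
    with k4 Knz show False by simp
  qed
  show ?thesis using D1 D2 c1 c2 c3 c4 by blast
qed


lemma two_elems:
  assumes "finite S" "2 \<le> card S"
  shows "\<exists>x y. x \<in> S \<and> y \<in> S \<and> x \<noteq> y"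
proof -
  have "S \<noteq> {}" using assms by auto
  then obtain x where x: "x \<in> S" by blast
  have "card (S - {x}) \<ge> 1" using assms x by (simp add: card_Diff_singleton)
  hence "S - {x} \<noteq> {}" by (metis card.empty not_one_le_zero)
  then obtain y where "y \<in> S - {x}" by blast
  thus ?thesis using x by blast
qed

lemma Qs_card_le2:
  fixes a c H1 H2 w1 w2 :: "'a::{finite,field}"
  assumes "H2 \<noteq> 0" "(2::'a) \<noteq> 0" "a \<noteq> 0"
  shows "card (Qs a c s H1 H2 w1 w2) \<le> 2"
proof -
  have "Qs a c s H1 H2 w1 w2 \<subseteq> {x. H2*(x+a)^2 - H1*x^2 = c}" by (auto simp: Qs_def)
  hence "card (Qs a c s H1 H2 w1 w2) \<le> card {x. H2*(x+a)^2 - H1*x^2 = c}"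
    by (intro card_mono) auto
  also have "\<dots> \<le> 2" by (rule quad_card_le2[OF assms])
  finally show ?thesis .
qed

lemma group5:
  fixes a c A B w :: "'a::{finite,field}"
  assumes two: "(2::'a) \<noteq> 0" and a: "a \<noteq> 0" and A: "A \<noteq> 0" and B: "B \<noteq> 0"
    and w: "w \<noteq> 0" and s: "odd s"
  shows "(card (Qs a c s B B w w) + of_bool (c = a^2*B \<and> a^s = w) + of_bool (c = -(a^2*B) \<and> (-a)^s = w))
      + (card (Qs a c s A A (-w) (-w)) + of_bool (c = a^2*A \<and> a^s = -w) + of_bool (c = -(a^2*A) \<and> (-a)^s = -w))
      + card (Qs a c s B A w (-w)) + card (Qs a c s A B (-w) w) \<le> 5"
proof -
  define M1 where "M1 = card (Qs a c s B B w w) + of_bool (c = a^2*B \<and> a^s = w) + of_bool (c = -(a^2*B) \<and> (-a)^s = w)"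
  define M2 where "M2 = card (Qs a c s A A (-w) (-w)) + of_bool (c = a^2*A \<and> a^s = -w) + of_bool (c = -(a^2*A) \<and> (-a)^s = -w)"
  have m1: "M1 \<le> 1" unfolding M1_def by (rule diag_le1[OF two a B w s])
  have m2: "M2 \<le> 1" unfolding M2_def by (rule diag_le1[OF two a A _ s]) (use w in simp)
  have p1: "card (Qs a c s B A w (-w)) \<le> 2" by (rule Qs_card_le2[OF A two a])
  have p2: "card (Qs a c s A B (-w) w) \<le> 2" by (rule Qs_card_le2[OF B two a])
  show ?thesis
  proof (cases "2 \<le> card (Qs a c s B A w (-w)) \<and> 2 \<le> card (Qs a c s A B (-w) w)")
    case True
    obtain x1 x2 where x: "x1 \<in> Qs a c s B A w (-w)" "x2 \<in> Qs a c s B A w (-w)" "x1 \<noteq> x2"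
      using two_elems[of "Qs a c s B A w (-w)"] True by auto
    obtain y1 y2 where y: "y1 \<in> Qs a c s A B (-w) w" "y2 \<in> Qs a c s A B (-w) w" "y1 \<noteq> y2"
      using two_elems[of "Qs a c s A B (-w) w"] True by auto
    have k: "Qs a c s B B w w = {} \<and> Qs a c s A A (-w) (-w) = {} \<and>
         c \<noteq> a^2*B \<and> c \<noteq> -(a^2*B) \<and> c \<noteq> a^2*A \<and> c \<noteq> -(a^2*A)"
      by (rule kill[OF two a A B w s x(3) x(1) x(2) y(3) y(1) y(2)])
    have "M1 = 0" unfolding M1_def using k by simp
    moreover have "M2 = 0" unfolding M2_def using k by simp
    ultimately show ?thesis using p1 p2 unfolding M1_def[symmetric] M2_def[symmetric] by simp
  next
    case False
    hence "card (Qs a c s B A w (-w)) + card (Qs a c s A B (-w) w) \<le> 3" using p1 p2 by auto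
    thus ?thesis using m1 m2 unfolding M1_def[symmetric] M2_def[symmetric] by simp
  qed
qed


lemma count_bound:
  fixes H F :: "'a::{finite,field} \<Rightarrow> 'a" and a c :: 'a and W :: "'a set"
  assumes two: "(2::'a) \<noteq> 0" and s: "odd s"
    and F: "\<And>x. F x = x^2 * H (x^s)"
    and W_def: "W = (\<lambda>x. x^s) ` (UNIV - {0})"
    and Hnz: "\<And>w. w \<in> W \<Longrightarrow> H w \<noteq> 0"
    and a: "a \<noteq> 0"
  shows "2 * card {x. F (x+a) - F x = c} \<le> card W * (4 * card W - 3)"
proof -
  have negpow: "\<And>z::'a. (- z)^s = - (z^s)" using s by (rule power_minus_odd)
  have s0: "s > 0" using s by (cases s) auto
  have finW: "finite W" by simp
  have W0: "0 \<notin> W" using s0 unfolding W_def by auto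
  have Wneg: "- w \<in> W" if "w \<in> W" for w
  proof -
    from that obtain x where x: "x \<noteq> 0" "w = x^s" unfolding W_def by auto
    have "-w = (-x)^s" using x negpow by simp
    thus ?thesis using x unfolding W_def by auto
  qed
  have wne: "- w \<noteq> w" if "w \<in> W" for w
  proof
    assume "- w = w"
    hence "w = 0" using self_neg_zero[OF two, of w] by simp
    thus False using W0 that by simp
  qed
  have inW: "x^s \<in> W" if "x \<noteq> 0" for x using that unfolding W_def by auto
  define Sol where "Sol = {x. F (x+a) - F x = c}"
  define Q where "Q w1 w2 = Qs a c s (H w1) (H w2) w1 w2" for w1 w2
  define Z0 where "Z0 w = (of_bool (c = a^2*H w \<and> a^s = w) + of_bool (c = -(a^2*H w) \<and> (-a)^s = w) :: nat)" for w
  define R where "R w = (\<Sum>w2\<in>W. card (Q w w2)) + Z0 w" for w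
  have sub: "Sol \<subseteq> (Sol \<inter> {0,-a}) \<union> (\<Union>p\<in>W\<times>W. Q (fst p) (snd p))"
  proof
    fix x assume x: "x \<in> Sol"
    show "x \<in> (Sol \<inter> {0,-a}) \<union> (\<Union>p\<in>W\<times>W. Q (fst p) (snd p))"
    proof (cases "x = 0 \<or> x = -a")
      case True thus ?thesis using x by auto
    next
      case False
      hence nz: "x \<noteq> 0" "x + a \<noteq> 0" by (auto simp: add_eq_0_iff)
      have "x \<in> Q (x^s) ((x+a)^s)"
        using x nz unfolding Q_def Qs_def Sol_def F by auto
      moreover have "(x^s, (x+a)^s) \<in> W \<times> W" using inW nz by auto
      ultimately show ?thesis by force
    qed
  qed
  have c1: "card Sol \<le> card (Sol \<inter> {0,-a}) + (\<Sum>p\<in>W\<times>W. card (Q (fst p) (snd p)))"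
  proof -
    have "card Sol \<le> card ((Sol \<inter> {0,-a}) \<union> (\<Union>p\<in>W\<times>W. Q (fst p) (snd p)))"
      by (rule card_mono[OF _ sub]) simp
    also have "\<dots> \<le> card (Sol \<inter> {0,-a}) + card (\<Union>p\<in>W\<times>W. Q (fst p) (snd p))"
      by (rule card_Un_le)
    also have "card (\<Union>p\<in>W\<times>W. Q (fst p) (snd p)) \<le> (\<Sum>p\<in>W\<times>W. card (Q (fst p) (snd p)))"
      by (rule card_UN_le) simp
    finally show ?thesis by simp
  qed
  have c3: "(\<Sum>p\<in>W\<times>W. card (Q (fst p) (snd p))) = (\<Sum>w\<in>W. \<Sum>w2\<in>W. card (Q w w2))"
    by (simp add: sum.cartesian_product case_prod_beta)
  have sol0: "0 \<in> Sol \<longleftrightarrow> c = a^2 * H (a^s)" unfolding Sol_def F using s0 by auto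
  have sola: "-a \<in> Sol \<longleftrightarrow> c = -(a^2 * H ((-a)^s))" unfolding Sol_def F using s0 by auto
  have c2: "card (Sol \<inter> {0,-a}) \<le> (\<Sum>w\<in>W. Z0 w)"
  proof -
    have "card (Sol \<inter> {0,-a}) \<le> of_bool (0 \<in> Sol) + of_bool (-a \<in> Sol)"
    proof (cases "0 \<in> Sol")
      case T0: True
      show ?thesis
      proof (cases "-a \<in> Sol")
        case True
        hence "Sol \<inter> {0,-a} = {0,-a}" using T0 by auto
        moreover have "(0::'a) \<noteq> -a" using a by simp
        ultimately show ?thesis using T0 True by simp
      next
        case False
        hence "Sol \<inter> {0,-a} = {0}" using T0 by auto
        thus ?thesis using T0 False by simp
      qed
    next
      case F0: False
      show ?thesis
      proof (cases "-a \<in> Sol")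
        case True
        hence "Sol \<inter> {0,-a} = {-a}" using F0 by auto
        thus ?thesis using F0 True by simp
      next
        case False
        hence "Sol \<inter> {0,-a} = {}" using F0 by auto
        thus ?thesis using F0 False by simp
      qed
    qed
    also have "of_bool (0 \<in> Sol) = (\<Sum>w\<in>W. (of_bool (c = a^2*H w \<and> a^s = w) :: nat))"
    proof -
      have "(\<Sum>w\<in>W. (of_bool (c = a^2*H w \<and> a^s = w) :: nat))
          = (\<Sum>w\<in>W. if a^s = w then of_bool (c = a^2*H w) else 0)"
        by (rule sum.cong) auto
      also have "\<dots> = of_bool (c = a^2*H (a^s))" using inW[OF a] finW by simp
      finally show ?thesis using sol0 by simp
    qed
    also have "of_bool (-a \<in> Sol) = (\<Sum>w\<in>W. (of_bool (c = -(a^2*H w) \<and> (-a)^s = w) :: nat))"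
    proof -
      have "(\<Sum>w\<in>W. (of_bool (c = -(a^2*H w) \<and> (-a)^s = w) :: nat))
          = (\<Sum>w\<in>W. if (-a)^s = w then of_bool (c = -(a^2*H w)) else 0)"
        by (rule sum.cong) auto
      also have "\<dots> = of_bool (c = -(a^2*H ((-a)^s)))" using inW[of "-a"] a finW by simp
      finally show ?thesis using sola by simp
    qed
    finally show ?thesis unfolding Z0_def by (simp add: sum.distrib)
  qed
  have total: "card Sol \<le> (\<Sum>w\<in>W. R w)"
    using c1 c2 c3 unfolding R_def by (simp add: sum.distrib)
  have pairb: "R w + R (-w) \<le> 4 * card W - 3" if w: "w \<in> W" for w
  proof -
    have mw: "-w \<in> W" using Wneg w .
    have ne: "-w \<noteq> w" using wne w .
    have split: "(\<Sum>w2\<in>W. card (Q v w2)) = card (Q v w) + card (Q v (-w))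
                   + (\<Sum>w2\<in>W - {w} - {-w}. card (Q v w2))" for v
    proof -
      have "(\<Sum>w2\<in>W. card (Q v w2)) = card (Q v w) + (\<Sum>w2\<in>W - {w}. card (Q v w2))"
        using finW w by (rule sum.remove)
      also have "(\<Sum>w2\<in>W - {w}. card (Q v w2)) = card (Q v (-w)) + (\<Sum>w2\<in>W - {w} - {-w}. card (Q v w2))"
        using mw ne finW by (intro sum.remove) auto
      finally show ?thesis by simp
    qed
    have cW: "card (W - {w} - {-w}) = card W - 2" using w mw ne finW
      by (simp add: card_Diff_singleton)
    have rest: "(\<Sum>w2\<in>W - {w} - {-w}. card (Q v w2)) \<le> 2 * (card W - 2)" if v: "v \<in> W" for v
    proof -
      have "(\<Sum>w2\<in>W - {w} - {-w}. card (Q v w2)) \<le> of_nat (card (W - {w} - {-w})) * 2"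
        by (rule sum_bounded_above) (unfold Q_def, rule Qs_card_le2[OF Hnz two a], auto)
      thus ?thesis using cW by simp
    qed
    have g: "(card (Q w w) + Z0 w) + (card (Q (-w) (-w)) + Z0 (-w)) + card (Q w (-w)) + card (Q (-w) w) \<le> 5"
    proof -
      have w0: "w \<noteq> 0" using W0 w by auto
      note G = group5[OF two a Hnz[OF mw] Hnz[OF w] w0 s, of c]
      show ?thesis unfolding Q_def Z0_def minus_minus using G by (simp only: add.assoc)
    qed
    have "R w = card (Q w w) + card (Q w (-w)) + (\<Sum>w2\<in>W - {w} - {-w}. card (Q w w2)) + Z0 w"
      unfolding R_def split ..
    moreover have "R (-w) = card (Q (-w) w) + card (Q (-w) (-w)) + (\<Sum>w2\<in>W - {w} - {-w}. card (Q (-w) w2)) + Z0 (-w)"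
      unfolding R_def split ..
    moreover have "card W \<ge> 2"
    proof -
      have "{w, -w} \<subseteq> W" using w mw by auto
      hence "card {w,-w} \<le> card W" by (intro card_mono) auto
      thus ?thesis using ne by simp
    qed
    ultimately show ?thesis using g rest[OF w] rest[OF mw] by linarith
  qed
  have reidx: "(\<Sum>w\<in>W. R (-w)) = (\<Sum>w\<in>W. R w)"
  proof -
    have b: "bij_betw uminus W W"
      by (rule bij_betw_byWitness[where f'=uminus]) (use Wneg in auto)
    show ?thesis using sum.reindex_bij_betw[OF b, of R] by simp
  qed
  have "2 * (\<Sum>w\<in>W. R w) = (\<Sum>w\<in>W. R w + R (-w))"
    using reidx by (simp add: sum.distrib)
  also have "\<dots> \<le> of_nat (card W) * (4 * card W - 3)"
    by (rule sum_bounded_above) (rule pairb)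
  finally have "2 * (\<Sum>w\<in>W. R w) \<le> card W * (4 * card W - 3)" by simp
  thus ?thesis using total unfolding Sol_def by linarith
qed


lemma roots_unity_card:
  fixes d :: nat
  assumes "d > 0"
  shows "card {y::'a::{finite,field}. y^d = 1} \<le> d"
proof -
  let ?p = "monom (1::'a) d - 1"
  have eq: "{y::'a. y^d = 1} = {y. poly ?p y = 0}" by (auto simp: poly_monom)
  have cd: "coeff ?p d = 1" using assms by (simp add: coeff_monom)
  have nz: "?p \<noteq> 0"
  proof
    assume "?p = 0"
    hence "coeff ?p d = 0" by (simp only: coeff_0)
    with cd show False by simp
  qed
  have "card {y. poly ?p y = 0} \<le> degree ?p" by (rule card_poly_roots_bound[OF nz])
  also have "degree ?p \<le> d" by (rule degree_diff_le) (auto simp: degree_monom_le)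
  finally show ?thesis using eq by simp
qed

theorem theorem1p4:
  fixes h :: "'a::{finite,field} poly" and d :: nat
  assumes q_odd_prime_power: "\<exists>(p::nat) k::nat. prime p \<and> odd p \<and> k > 0 \<and> card (UNIV :: 'a set) = p ^ k"
    and d_even: "even d"
    and d_dvd: "d dvd (card (UNIV :: 'a set) - 1)"
    and quot_odd: "odd ((card (UNIV :: 'a set) - 1) div d)"
    and perm: "permutation_poly
                 (monom 1 2 * pcompose h (monom 1 ((card (UNIV :: 'a set) - 1) div d)))"
  shows "real (diff_uniformity
                 (poly (monom 1 2 * pcompose h (monom 1 ((card (UNIV :: 'a set) - 1) div d)))))
           \<le> 2 * real d ^ 2 - 3 / 2 * real d"
proof -
  define q where "q = card (UNIV :: 'a set)"
  define s where "s = (q - 1) div d"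
  define H where "H = poly h"
  define F where "F = poly (monom 1 2 * pcompose h (monom 1 ((card (UNIV :: 'a set) - 1) div d)))"
  have F: "\<And>x. F x = x^2 * H (x^s)" unfolding F_def H_def s_def q_def
    by (simp add: poly_pcompose poly_monom)
  obtain p k where pk: "odd p" "k > 0" "q = p^k" using q_odd_prime_power unfolding q_def by blast
  have qodd: "odd q" using pk by simp
  have two: "(2::'a) \<noteq> 0" using two_ne_zero_odd qodd unfolding q_def by blast
  have q2: "q \<ge> 2"
  proof -
    have "card {0::'a, 1} \<le> q" unfolding q_def by (rule card_mono) auto
    thus ?thesis by simp
  qed
  have d0: "d > 0"
  proof (rule ccontr)
    assume "\<not> d > 0" hence "d = 0" by simp
    with d_dvd have "q - 1 = 0" unfolding q_def by simp
    with q2 show False by simp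
  qed
  have sd: "s * d = q - 1" unfolding s_def q_def using d_dvd by simp
  have sodd: "odd s" using quot_odd unfolding s_def q_def .
  define W where "W = (\<lambda>x::'a. x^s) ` (UNIV - {0})"
  have Wsub: "W \<subseteq> {y. y^d = 1}"
  proof
    fix y assume "y \<in> W"
    then obtain x where x: "x \<noteq> 0" "y = x^s" unfolding W_def by auto
    have "y^d = x^(s*d)" using x by (simp add: power_mult)
    also have "\<dots> = 1" using fermat_ff[OF x(1)] sd unfolding q_def by simp
    finally show "y \<in> {y. y^d = 1}" by simp
  qed
  have Wcard: "card W \<le> d"
    using card_mono[OF _ Wsub] roots_unity_card[OF d0, where 'a='a] by simp
  have inj: "inj F" using perm unfolding permutation_poly_def F_def bij_def by simp
  have Hnz: "H w \<noteq> 0" if "w \<in> W" for w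
  proof
    assume h0: "H w = 0"
    from that obtain x where x: "x \<noteq> 0" "w = x^s" unfolding W_def by auto
    have "F x = 0" using F x h0 by simp
    moreover have "F 0 = 0" using F by simp
    ultimately have "x = 0" using inj by (metis injD)
    with x show False by simp
  qed
  have bound: "real (card {x. F (x+a) - F x = c}) \<le> 2 * real d ^ 2 - 3 / 2 * real d"
    if a: "a \<noteq> 0" for a c
  proof -
    have cb: "2 * card {x. F (x+a) - F x = c} \<le> card W * (4 * card W - 3)"
      by (rule count_bound[OF two sodd F W_def Hnz a])
    also have "\<dots> \<le> d * (4 * d - 3)"
      using Wcard by (intro mult_mono) auto
    finally have "real (2 * card {x. F (x+a) - F x = c}) \<le> real (d * (4 * d - 3))" by linarith
    moreover have "real (d * (4 * d - 3)) = real d * (4 * real d - 3)" using d0 by (simp add: of_nat_diff)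
    ultimately show ?thesis by (simp add: power2_eq_square algebra_simps)
  qed
  define S where "S = {card {x. F (x + a) - F x = c} | a c. a \<noteq> 0}"
  have Sfin: "finite S"
  proof -
    have "S \<subseteq> {..q}" unfolding S_def q_def by (auto intro: card_mono)
    thus ?thesis by (rule finite_subset) simp
  qed
  have "card {x. F (x + 1) - F x = 0} \<in> S" unfolding S_def
    by (rule CollectI, rule exI[of _ "1::'a"], rule exI[of _ "0::'a"]) simp
  hence Sne: "S \<noteq> {}" by auto
  have "Max S \<in> S" using Sfin Sne by (rule Max_in)
  then obtain a c where ac: "a \<noteq> 0" "Max S = card {x. F (x + a) - F x = c}" unfolding S_def by auto
  have "diff_uniformity F = Max S" unfolding diff_uniformity_def S_def ..
  hence "real (diff_uniformity F) \<le> 2 * real d ^ 2 - 3 / 2 * real d" using ac bound by simp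
  thus ?thesis unfolding F_def .
qed

end
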